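(* Let $c_{a,1}>0$ and $c_{c,1}>0$ be constants, let $r_{a,1}:(0,\infty)\to(0,\infty)$ be a positive, decreasing, at least twice continuously differentiable function, and let $r_{c,1}:(0,\infty)\to(0,\infty)$ be a positive, increasing, at least twice continuously differentiable function. Assume $$c_{a,1}\,r_{a,1}''(n)+c_{c,1}\,r_{c,1}''(n)>0\quad\text{for all } n\in(0,\infty),$$ and assume there exists $\bar n_1\in(0,\infty)$ such that $$c_{a,1}\,r_{a,1}'(\bar n_1)+c_{c,1}\,r_{c,1}'(\bar n_1)=0.$$ For each real budget $p\ge 2$ define $u_1:[1,p-1]\to(0,\infty)$, $u_1(n_1)=\frac{1}{p-n_1}\big(c_{a,1}r_{a,1}(n_1)+c_{c,1}r_{c,1}(n_1)\big)$, and let $n_1^*=n_1^*(p)$ be its unique global minimizer on $[1,p-1]$. Then $\bar n_1$ is unique, and for every budget $p$, $$n_1^*\le \max\{1,\bar n_1\},$$ a bound independent of $p$.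
   Context: Under the stated hypotheses, $u_1$ has a unique global minimizer on $[1,p-1]$ for every $p\ge 2$; $n_1^*$ denotes this minimizer. The functions $r_{a,1}$, $r_{c,1}$ model accuracy and evaluation-cost rates of a low-fidelity model trained with $n_1$ high-fidelity samples. *)

theory Defs
  imports Complex_Main
begin

definition u1 :: "real \<Rightarrow> real \<Rightarrow> (real \<Rightarrow> real) \<Rightarrow> (real \<Rightarrow> real) \<Rightarrow> real \<Rightarrow> real \<Rightarrow> real" where
  "u1 ca cc ra rc p n = (ca * ra n + cc * rc n) / (p - n)"

definition is_global_min_u1 :: "real \<Rightarrow> real \<Rightarrow> (real \<Rightarrow> real) \<Rightarrow> (real \<Rightarrow> real) \<Rightarrow> real \<Rightarrow> real \<Rightarrow> bool" where
  "is_global_min_u1 ca cc ra rc p n \<longleftrightarrow>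
     n \<in> {1..p-1} \<and> (\<forall>m\<in>{1..p-1}. u1 ca cc ra rc p n \<le> u1 ca cc ra rc p m)"

end

theory Submission
  imports Defs
begin

theorem proposition2:
  fixes ca cc :: real
    and ra ra' ra'' rc rc' rc'' :: "real \<Rightarrow> real"
    and nbar :: real
  assumes ca_pos: "ca > 0" and cc_pos: "cc > 0"
    and ra_pos: "\<And>x. x > 0 \<Longrightarrow> ra x > 0"
    and ra_decr: "\<And>x y. 0 < x \<Longrightarrow> x \<le> y \<Longrightarrow> ra y \<le> ra x"
    and ra_d1: "\<And>x. x > 0 \<Longrightarrow> (ra has_real_derivative ra' x) (at x)"
    and ra_d2: "\<And>x. x > 0 \<Longrightarrow> (ra' has_real_derivative ra'' x) (at x)"
    and ra_C2: "continuous_on {0<..} ra''"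
    and rc_pos: "\<And>x. x > 0 \<Longrightarrow> rc x > 0"
    and rc_incr: "\<And>x y. 0 < x \<Longrightarrow> x \<le> y \<Longrightarrow> rc x \<le> rc y"
    and rc_d1: "\<And>x. x > 0 \<Longrightarrow> (rc has_real_derivative rc' x) (at x)"
    and rc_d2: "\<And>x. x > 0 \<Longrightarrow> (rc' has_real_derivative rc'' x) (at x)"
    and rc_C2: "continuous_on {0<..} rc''"
    and convex: "\<And>x. x > 0 \<Longrightarrow> ca * ra'' x + cc * rc'' x > 0"
    and nbar_pos: "nbar > 0"
    and nbar_crit: "ca * ra' nbar + cc * rc' nbar = 0"
  shows "(\<forall>m. m > 0 \<and> ca * ra' m + cc * rc' m = 0 \<longrightarrow> m = nbar) \<and>
         (\<forall>p n. p \<ge> 2 \<and> is_global_min_u1 ca cc ra rc p n \<longrightarrow> n \<le> max 1 nbar)"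
proof -
  define g where "g x = ca * ra' x + cc * rc' x" for x
  define f where "f x = ca * ra x + cc * rc x" for x
  have gd: "DERIV g x :> ca * ra'' x + cc * rc'' x" if "x > 0" for x
    unfolding g_def using ra_d2[OF that] rc_d2[OF that]
    by (auto intro!: derivative_eq_intros)
  have fd: "DERIV f x :> g x" if "x > 0" for x
    unfolding f_def g_def using ra_d1[OF that] rc_d1[OF that]
    by (auto intro!: derivative_eq_intros)
  have gmono: "g x < g y" if xy: "0 < x" "x < y" for x y
  proof -
    obtain z where z: "x < z" "z < y" "g y - g x = (y - x) * (ca * ra'' z + cc * rc'' z)"
      using MVT2[OF xy(2), of g "\<lambda>x. ca * ra'' x + cc * rc'' x"] gd xy(1) by (meson order_less_le_trans)
    have "ca * ra'' z + cc * rc'' z > 0" using convex z that by auto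
    then show ?thesis using z that by (smt (verit) mult_pos_pos)
  qed
  have g0: "g nbar = 0" using nbar_crit g_def by simp
  have fmono: "f x < f y" if xy: "nbar \<le> x" "x < y" for x y
  proof -
    obtain z where z: "x < z" "z < y" "f y - f x = (y - x) * g z"
      using MVT2[OF xy(2), of f g] fd xy(1) nbar_pos by (meson order_less_le_trans order_trans)
    have "g z > 0" using gmono[of nbar z] g0 z that nbar_pos by auto
    then show ?thesis using z that by (smt (verit) mult_pos_pos)
  qed
  have part1: "\<forall>m. m > 0 \<and> ca * ra' m + cc * rc' m = 0 \<longrightarrow> m = nbar"
  proof (intro allI impI)
    fix m assume m: "m > 0 \<and> ca * ra' m + cc * rc' m = 0"
    then have "g m = 0" by (simp add: g_def)
    then show "m = nbar" using gmono[of m nbar] gmono[of nbar m] m g0 nbar_pos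
      by (cases m nbar rule: linorder_cases) auto
  qed
  have part2: "n \<le> max 1 nbar" if p: "p \<ge> 2" and gm: "is_global_min_u1 ca cc ra rc p n" for p n
  proof (rule ccontr)
    assume nn: "\<not> n \<le> max 1 nbar"
    define m where "m = max 1 nbar"
    have n1: "1 \<le> n" "n \<le> p - 1" and le: "u1 ca cc ra rc p n \<le> u1 ca cc ra rc p m"
      using gm nn unfolding is_global_min_u1_def m_def by auto
    have mn: "m < n" "1 \<le> m" "nbar \<le> m" using nn m_def by auto
    have fmn: "f m < f n" using fmono[OF mn(3) mn(1)] .
    have fm: "f m > 0" using ra_pos rc_pos ca_pos cc_pos mn unfolding f_def
      by (smt (verit) mult_pos_pos)
    have pn: "p - n > 0" "p - m > p - n" using n1 mn by auto
    have "u1 ca cc ra rc p m = f m / (p - m)" by (simp add: u1_def f_def)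
    also have "\<dots> < f n / (p - m)" using fmn pn by (simp add: divide_strict_right_mono)
    also have "\<dots> < f n / (p - n)" using pn fm fmn
      by (intro divide_strict_left_mono) auto
    also have "\<dots> = u1 ca cc ra rc p n" by (simp add: u1_def f_def)
    finally show False using le by simp
  qed
  show ?thesis using part1 part2 by blast
qed

end
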